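(* Let $n\ge3$, $2\le k$, $1\le m<k$ be integers, let $0<\varepsilon\le\frac{1}{8(n-1)}$, let $\beta\in(0,1)$, and let $0<\delta\le\frac{k-m}{k}(1-\beta)$. Let $\mathcal{A}$ be any algorithm for the best arm retention problem that retains $m$ out of $k$ arms, has an almost surely finite stopping time, and is $(\varepsilon,\delta)$-PAC on the instance family $\mathcal{I}_0$. Then its total number of samples $T$ on input $\rho_1$ satisfies $$\mathbb{E}_{\rho_1}[T]\ge\frac{\beta}{32}\cdot\frac{k-m-\delta}{\varepsilon^2}\log\frac{k-m-\delta}{(k-1)\delta}.$$
   Context: Best arm retention (BAR): an algorithm is given $k$ Bernoulli arms, adaptively samples (pulls) arms one at a time, stops at a stopping time $T$, and outputs ("retains") a set of exactly $m$ of the $k$ arms. It is called $(\varepsilon,\delta)$-PAC on a family of instances if on every instance of the family it retains the best arm with probability at least $1-\delta$. The family $\mathcal{I}_0=\{\rho_1,\dots,\rho_k\}$: $\rho_1$ has arm 1 with mean $\frac12+n\varepsilon$ and arms $2,\dots,k$ with mean $\frac12+(n-1)\varepsilon$; for $2\le i\le k$, $\rho_i$ equals $\rho_1$ except that arm $i$ has mean $\frac12+(n+1)\varepsilon$. $\mathbb{E}_{\rho_1}$ denotes expectation when the algorithm runs on $\rho_1$. *)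

theory Defs
  imports "HOL-Probability.Probability"
begin

text \<open>Arms are indexed by 1..k. A history is the list of (arm pulled, observed reward).
  A (possibly randomised) adaptive algorithm is a policy mapping each history to a
  distribution over actions: pull an arm, or stop and retain a set of arms.\<close>

datatype action = Pull nat | Stop "nat set"

type_synonym history = "(nat \<times> bool) list"
type_synonym state = "history \<times> nat set option"
type_synonym policy = "history \<Rightarrow> action pmf"

definition step :: "(nat \<Rightarrow> real) \<Rightarrow> policy \<Rightarrow> state \<Rightarrow> state pmf" where
  "step \<mu> pol s = (case s of
      (h, Some S) \<Rightarrow> return_pmf (h, Some S)
    | (h, None) \<Rightarrow> bind_pmf (pol h) (\<lambda>a. case a of
          Stop S \<Rightarrow> return_pmf (h, Some S)
        | Pull i \<Rightarrow> map_pmf (\<lambda>r. (h @ [(i, r)], None)) (bernoulli_pmf (\<mu> i))))"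

definition run :: "(nat \<Rightarrow> real) \<Rightarrow> policy \<Rightarrow> nat \<Rightarrow> state pmf" where
  "run \<mu> pol N = ((\<lambda>p. bind_pmf p (step \<mu> pol)) ^^ N) (return_pmf ([], None))"

definition valid_policy :: "nat \<Rightarrow> nat \<Rightarrow> policy \<Rightarrow> bool" where
  "valid_policy k m pol \<longleftrightarrow> (\<forall>h. \<forall>a \<in> set_pmf (pol h). case a of
       Pull i \<Rightarrow> i \<in> {1..k}
     | Stop S \<Rightarrow> S \<subseteq> {1..k} \<and> card S = m)"

definition stops_as :: "(nat \<Rightarrow> real) \<Rightarrow> policy \<Rightarrow> bool" where
  "stops_as \<mu> pol \<longleftrightarrow>
     (\<lambda>N. measure_pmf.prob (run \<mu> pol N) {s. snd s \<noteq> None}) \<longlonglongrightarrow> 1"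

definition retain_prob :: "(nat \<Rightarrow> real) \<Rightarrow> policy \<Rightarrow> nat \<Rightarrow> real" where
  "retain_prob \<mu> pol b =
     (SUP N. measure_pmf.prob (run \<mu> pol N) {s. \<exists>S. snd s = Some S \<and> b \<in> S})"

text \<open>Number of samples T: T > t iff the algorithm has not stopped after t+1 decisions
  (each non-stopping decision is one pull). E[T] = sum over t of P(T > t).\<close>
definition expected_T :: "(nat \<Rightarrow> real) \<Rightarrow> policy \<Rightarrow> ennreal" where
  "expected_T \<mu> pol =
     (\<Sum>t. ennreal (measure_pmf.prob (run \<mu> pol (Suc t)) {s. snd s = None}))"

definition rho :: "nat \<Rightarrow> real \<Rightarrow> nat \<Rightarrow> nat \<Rightarrow> real" where
  "rho n \<epsilon> i j =
     (if j = 1 then 1/2 + real n * \<epsilon>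
      else if j = i then 1/2 + (real n + 1) * \<epsilon>
      else 1/2 + (real n - 1) * \<epsilon>)"

definition PAC_I0 :: "nat \<Rightarrow> nat \<Rightarrow> real \<Rightarrow> real \<Rightarrow> policy \<Rightarrow> bool" where
  "PAC_I0 k n \<epsilon> \<delta> pol \<longleftrightarrow> (\<forall>i \<in> {1..k}. retain_prob (rho n \<epsilon> i) pol i \<ge> 1 - \<delta>)"

end

theory Submission
  imports Defs
begin


lemma integral_bind_pmf_bdd:
  fixes f :: "'b \<Rightarrow> real"
  assumes "\<And>x. \<bar>f x\<bar> \<le> B"
  shows "(\<integral>x. f x \<partial>measure_pmf (bind_pmf M N)) = (\<integral>x. (\<integral>y. f y \<partial>measure_pmf (N x)) \<partial>measure_pmf M)"
  unfolding measure_pmf_bind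
  apply (rule integral_bind[where K="count_space UNIV" and B=B and B'=1])
  using assms apply (auto intro!: measure_pmf_in_subprob_algebra)
  done

lemma prob_bind_pmf:
  "measure_pmf.prob (bind_pmf M N) A = (\<integral>x. measure_pmf.prob (N x) A \<partial>measure_pmf M)"
proof -
  have "measure_pmf.prob (bind_pmf M N) A = (\<integral>x. indicator A x \<partial>measure_pmf (bind_pmf M N))"
    by simp
  also have "\<dots> = (\<integral>x. (\<integral>y. indicator A y \<partial>measure_pmf (N x)) \<partial>measure_pmf M)"
    by (rule integral_bind_pmf_bdd[where B=1]) (auto simp: indicator_def)
  finally show ?thesis by simp
qed



definition L :: "real \<Rightarrow> real \<Rightarrow> real" where "L x y = x * ln (x / y)"
definition g :: "real \<Rightarrow> real \<Rightarrow> real" where "g x y = L x y + L (1 - x) (1 - y)"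

lemma ln_ge_1_minus_inv: "(t::real) > 0 \<Longrightarrow> ln t \<ge> 1 - 1 / t"
proof -
  assume t: "t > 0"
  have "ln (1/t) \<le> 1/t - 1" using t ln_le_minus_one[of "1/t"] by simp
  moreover have "ln (1/t) = - ln t" using t by (simp add: ln_div)
  ultimately show ?thesis by simp
qed

lemma LS:
  assumes "0 \<le> x" "0 \<le> y" "y = 0 \<longrightarrow> x = 0" "X > 0" "Y > 0"
  shows "L x y \<ge> x * ln (X / Y) + x - y * X / Y"
proof (cases "x = 0")
  case True
  then show ?thesis using assms by (simp add: L_def)
next
  case False
  then have x: "x > 0" and y: "y > 0" using assms by auto
  have t: "x * Y / (y * X) > 0" using x y assms by simp
  have "ln (x / y) - ln (X / Y) = ln (x * Y / (y * X))"
    using x y assms by (simp add: ln_div ln_mult)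
  also have "\<dots> \<ge> 1 - 1 / (x * Y / (y * X))" by (rule ln_ge_1_minus_inv[OF t])
  finally have "ln (x / y) - ln (X / Y) \<ge> 1 - y * X / (x * Y)" by simp
  then have "x * (ln (x / y) - ln (X / Y)) \<ge> x * (1 - y * X / (x * Y))"
    using x by (intro mult_left_mono) auto
  then show ?thesis using x assms by (simp add: L_def algebra_simps)
qed

lemma gibbs: "0 \<le> x \<Longrightarrow> 0 \<le> y \<Longrightarrow> (y = 0 \<longrightarrow> x = 0) \<Longrightarrow> L x y \<ge> x - y"
  using LS[of x y 1 1] by simp

lemma g_nonneg:
  assumes "0 \<le> x" "x \<le> 1" "0 \<le> y" "y \<le> 1" "y = 0 \<longrightarrow> x = 0" "y = 1 \<longrightarrow> x = 1"
  shows "g x y \<ge> 0"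
  using gibbs[of x y] gibbs[of "1-x" "1-y"] assms by (simp add: g_def)

lemma logsum2:
  assumes "0 \<le> a1" "0 \<le> a0" "0 \<le> b1" "0 \<le> b0" "b1 = 0 \<longrightarrow> a1 = 0" "b0 = 0 \<longrightarrow> a0 = 0"
  shows "L (a1 + a0) (b1 + b0) \<le> L a1 b1 + L a0 b0"
proof (cases "a1 + a0 = 0")
  case True
  then have "a1 = 0" "a0 = 0" using assms by auto
  then show ?thesis by (simp add: L_def)
next
  case False
  then have X: "a1 + a0 > 0" using assms by auto
  then have Y: "b1 + b0 > 0" using assms by force
  have 1: "L a1 b1 \<ge> a1 * ln ((a1+a0) / (b1+b0)) + a1 - b1 * (a1+a0) / (b1+b0)"
    by (rule LS) (use assms X Y in auto)
  have 2: "L a0 b0 \<ge> a0 * ln ((a1+a0) / (b1+b0)) + a0 - b0 * (a1+a0) / (b1+b0)"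
    by (rule LS) (use assms X Y in auto)
  have "b1 * (a1+a0) / (b1+b0) + b0 * (a1+a0) / (b1+b0) = a1 + a0"
  proof -
    have "b1 * (a1+a0) / (b1+b0) + b0 * (a1+a0) / (b1+b0) = ((b1+b0) * (a1+a0)) / (b1+b0)"
      by (simp only: add_divide_distrib[symmetric] distrib_right)
    also have "\<dots> = a1 + a0" using Y by simp
    finally show ?thesis .
  qed
  then show ?thesis using 1 2 by (simp add: L_def algebra_simps)
qed

lemma L_scale:
  assumes "p > 0" "q > 0" "0 \<le> x" "0 \<le> y" "y = 0 \<longrightarrow> x = 0"
  shows "L (p * x) (q * y) = p * x * ln (p / q) + p * L x y"
proof (cases "x = 0")
  case True then show ?thesis by (simp add: L_def)
next
  case False
  then have "x > 0" "y > 0" using assms by auto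
  then show ?thesis using assms by (simp add: L_def ln_div ln_mult algebra_simps)
qed

lemma J2:
  assumes p: "0 < p" "p < 1" and q: "0 < q" "q < 1"
    and x: "0 \<le> x1" "x1 \<le> 1" "0 \<le> x0" "x0 \<le> 1"
    and y: "0 \<le> y1" "y1 \<le> 1" "0 \<le> y0" "y0 \<le> 1"
    and ac: "y1 = 0 \<longrightarrow> x1 = 0" "y1 = 1 \<longrightarrow> x1 = 1" "y0 = 0 \<longrightarrow> x0 = 0" "y0 = 1 \<longrightarrow> x0 = 1"
  shows "g (p * x1 + (1 - p) * x0) (q * y1 + (1 - q) * y0) \<le> g p q + p * g x1 y1 + (1 - p) * g x0 y0"
    and "q * y1 + (1 - q) * y0 = 0 \<longrightarrow> p * x1 + (1 - p) * x0 = 0"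
    and "q * y1 + (1 - q) * y0 = 1 \<longrightarrow> p * x1 + (1 - p) * x0 = 1"
proof -
  have a: "L (p * x1 + (1 - p) * x0) (q * y1 + (1 - q) * y0) \<le> L (p*x1) (q*y1) + L ((1-p)*x0) ((1-q)*y0)"
    by (rule logsum2) (use p q x y ac in auto)
  have b: "L (p * (1-x1) + (1 - p) * (1-x0)) (q * (1-y1) + (1 - q) * (1-y0)) \<le> L (p*(1-x1)) (q*(1-y1)) + L ((1-p)*(1-x0)) ((1-q)*(1-y0))"
    by (rule logsum2) (use p q x y ac in auto)
  have e1: "1 - (p * x1 + (1 - p) * x0) = p * (1-x1) + (1 - p) * (1-x0)" by (simp add: algebra_simps)
  have e2: "1 - (q * y1 + (1 - q) * y0) = q * (1-y1) + (1 - q) * (1-y0)" by (simp add: algebra_simps)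
  have s1: "L (p*x1) (q*y1) = p * x1 * ln (p / q) + p * L x1 y1" by (rule L_scale) (use p q x y ac in auto)
  have s2: "L ((1-p)*x0) ((1-q)*y0) = (1-p) * x0 * ln ((1-p) / (1-q)) + (1-p) * L x0 y0" by (rule L_scale) (use p q x y ac in auto)
  have s3: "L (p*(1-x1)) (q*(1-y1)) = p * (1-x1) * ln (p / q) + p * L (1-x1) (1-y1)" by (rule L_scale) (use p q x y ac in auto)
  have s4: "L ((1-p)*(1-x0)) ((1-q)*(1-y0)) = (1-p) * (1-x0) * ln ((1-p) / (1-q)) + (1-p) * L (1-x0) (1-y0)" by (rule L_scale) (use p q x y ac in auto)
  show "g (p * x1 + (1 - p) * x0) (q * y1 + (1 - q) * y0) \<le> g p q + p * g x1 y1 + (1 - p) * g x0 y0"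
    using a b unfolding g_def e1 e2 s1 s2 s3 s4 by (simp add: L_def algebra_simps)
  show "q * y1 + (1 - q) * y0 = 0 \<longrightarrow> p * x1 + (1 - p) * x0 = 0"
  proof
    assume "q * y1 + (1 - q) * y0 = 0"
    then have "y1 = 0" "y0 = 0" using q y
      by (smt (verit) mult_nonneg_nonneg mult_pos_pos)+
    then show "p * x1 + (1 - p) * x0 = 0" using ac by simp
  qed
  show "q * y1 + (1 - q) * y0 = 1 \<longrightarrow> p * x1 + (1 - p) * x0 = 1"
  proof
    assume h: "q * y1 + (1 - q) * y0 = 1"
    have "q * (1 - y1) + (1-q) * (1 - y0) = 0" using h by (simp add: algebra_simps)
    then have "y1 = 1" "y0 = 1" using q y
      by (smt (verit) mult_nonneg_nonneg mult_pos_pos)+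
    then show "p * x1 + (1 - p) * x0 = 1" using ac by (simp add: algebra_simps)
  qed
qed



lemma pmf_intg: "(\<And>a. a \<in> set_pmf w \<Longrightarrow> \<bar>f a\<bar> \<le> B) \<Longrightarrow> integrable (measure_pmf w) (f :: _ \<Rightarrow> real)"
  by (rule measure_pmf.integrable_const_bound[where B=B]) (auto simp: AE_measure_pmf_iff)

lemma pmf_int_zero:
  fixes f :: "_ \<Rightarrow> real"
  assumes "\<And>a. a \<in> set_pmf w \<Longrightarrow> 0 \<le> f a \<and> f a \<le> B"
  shows "(\<integral>a. f a \<partial>w) = 0 \<longleftrightarrow> (\<forall>a\<in>set_pmf w. f a = 0)"
proof -
  have i: "integrable (measure_pmf w) f" by (rule pmf_intg[where B=B]) (use assms in force)
  show ?thesis using integral_nonneg_eq_0_iff_AE[OF i] assms by (auto simp: AE_measure_pmf_iff)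
qed

lemma LJ:
  fixes w :: "'a pmf" and u v :: "'a \<Rightarrow> real"
  assumes A: "\<And>a. a\<in>set_pmf w \<Longrightarrow> 0 \<le> u a \<and> u a \<le> 1 \<and> 0 \<le> v a \<and> v a \<le> 1 \<and> (v a = 0 \<longrightarrow> u a = 0) \<and> \<bar>L (u a) (v a)\<bar> \<le> B"
  shows "L (\<integral>a. u a \<partial>w) (\<integral>a. v a \<partial>w) \<le> (\<integral>a. L (u a) (v a) \<partial>w)"
    and "(\<integral>a. v a \<partial>w) = 0 \<longrightarrow> (\<integral>a. u a \<partial>w) = 0"
proof -
  have iu: "integrable w u" by (rule pmf_intg[where B=1]) (use A in force)
  have iv: "integrable w v" by (rule pmf_intg[where B=1]) (use A in force)
  have iL: "integrable w (\<lambda>a. L (u a) (v a))" by (rule pmf_intg[where B=B]) (use A in force)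
  have U0: "(\<integral>a. u a \<partial>w) = 0 \<longleftrightarrow> (\<forall>a\<in>set_pmf w. u a = 0)" by (rule pmf_int_zero[where B=1]) (use A in force)
  have V0: "(\<integral>a. v a \<partial>w) = 0 \<longleftrightarrow> (\<forall>a\<in>set_pmf w. v a = 0)" by (rule pmf_int_zero[where B=1]) (use A in force)
  show ac: "(\<integral>a. v a \<partial>w) = 0 \<longrightarrow> (\<integral>a. u a \<partial>w) = 0" using U0 V0 A by auto
  show "L (\<integral>a. u a \<partial>w) (\<integral>a. v a \<partial>w) \<le> (\<integral>a. L (u a) (v a) \<partial>w)"
  proof (cases "(\<integral>a. u a \<partial>w) = 0")
    case True
    then have "\<forall>a\<in>set_pmf w. u a = 0" using U0 by simp
    then have "(\<integral>a. L (u a) (v a) \<partial>w) = (\<integral>a. 0 \<partial>w)"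
      by (intro integral_cong_AE) (auto simp: AE_measure_pmf_iff L_def)
    then show ?thesis using True by (simp add: L_def)
  next
    case False
    define U where "U = (\<integral>a. u a \<partial>w)"
    define V where "V = (\<integral>a. v a \<partial>w)"
    have Upos: "U > 0" using False A unfolding U_def
      by (metis (no_types, lifting) AE_measure_pmf_iff integral_nonneg_AE order_le_less)
    have "V \<noteq> 0" using ac False unfolding V_def by auto
    then have Vpos: "V > 0" using A unfolding V_def
      by (metis (no_types, lifting) AE_measure_pmf_iff integral_nonneg_AE order_le_less)
    have pt: "\<And>a. a \<in> set_pmf w \<Longrightarrow> L (u a) (v a) \<ge> u a * ln (U / V) + u a - v a * U / V"
      by (rule LS) (use A Upos Vpos in auto)
    have "(\<integral>a. L (u a) (v a) \<partial>w) \<ge> (\<integral>a. u a * ln (U / V) + u a - v a * U / V \<partial>w)"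
      by (rule integral_mono_AE) (use iu iv iL pt in \<open>auto simp: AE_measure_pmf_iff\<close>)
    also have "(\<integral>a. u a * ln (U / V) + u a - v a * U / V \<partial>w) = U * ln (U / V) + U - V * U / V"
      using iu iv unfolding U_def V_def by (simp add: integral_mult_left_zero integral_divide_zero)
    also have "\<dots> = L U V" using Vpos by (simp add: L_def)
    finally show ?thesis unfolding U_def V_def .
  qed
qed



lemma gJ:
  fixes w :: "'a pmf" and X Y :: "'a \<Rightarrow> real"
  assumes A: "\<And>a. a\<in>set_pmf w \<Longrightarrow> 0 \<le> X a \<and> X a \<le> 1 \<and> 0 \<le> Y a \<and> Y a \<le> 1 \<and> (Y a = 0 \<longrightarrow> X a = 0) \<and> (Y a = 1 \<longrightarrow> X a = 1) \<and> g (X a) (Y a) \<le> B"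
  shows "g (\<integral>a. X a \<partial>w) (\<integral>a. Y a \<partial>w) \<le> (\<integral>a. g (X a) (Y a) \<partial>w)"
    and "(\<integral>a. Y a \<partial>w) = 0 \<longrightarrow> (\<integral>a. X a \<partial>w) = 0"
    and "(\<integral>a. Y a \<partial>w) = 1 \<longrightarrow> (\<integral>a. X a \<partial>w) = 1"
proof -
  have bd: "\<bar>L (X a) (Y a)\<bar> \<le> B + 1 \<and> \<bar>L (1 - X a) (1 - Y a)\<bar> \<le> B + 1" if a: "a \<in> set_pmf w" for a
  proof -
    have 1: "L (X a) (Y a) \<ge> X a - Y a" by (rule gibbs) (use A[OF a] in auto)
    have 2: "L (1 - X a) (1 - Y a) \<ge> (1 - X a) - (1 - Y a)" by (rule gibbs) (use A[OF a] in auto)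
    have 3: "g (X a) (Y a) \<le> B" using A[OF a] by auto
    show ?thesis using 1 2 3 A[OF a] unfolding g_def by auto
  qed
  have iX: "integrable w X" by (rule pmf_intg[where B=1]) (use A in force)
  have iY: "integrable w Y" by (rule pmf_intg[where B=1]) (use A in force)
  have iL1: "integrable w (\<lambda>a. L (X a) (Y a))" by (rule pmf_intg[where B="B+1"]) (use bd in force)
  have iL2: "integrable w (\<lambda>a. L (1 - X a) (1 - Y a))" by (rule pmf_intg[where B="B+1"]) (use bd in force)
  have l1: "L (\<integral>a. X a \<partial>w) (\<integral>a. Y a \<partial>w) \<le> (\<integral>a. L (X a) (Y a) \<partial>w)"
   and a1: "(\<integral>a. Y a \<partial>w) = 0 \<longrightarrow> (\<integral>a. X a \<partial>w) = 0"
    using LJ[of w X Y "B+1"] A bd by auto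
  have l2: "L (\<integral>a. 1 - X a \<partial>w) (\<integral>a. 1 - Y a \<partial>w) \<le> (\<integral>a. L (1 - X a) (1 - Y a) \<partial>w)"
   and a2: "(\<integral>a. 1 - Y a \<partial>w) = 0 \<longrightarrow> (\<integral>a. 1 - X a \<partial>w) = 0"
    using LJ[of w "\<lambda>a. 1 - X a" "\<lambda>a. 1 - Y a" "B+1"] A bd by auto
  have eX: "(\<integral>a. 1 - X a \<partial>w) = 1 - (\<integral>a. X a \<partial>w)" using iX by simp
  have eY: "(\<integral>a. 1 - Y a \<partial>w) = 1 - (\<integral>a. Y a \<partial>w)" using iY by simp
  show "g (\<integral>a. X a \<partial>w) (\<integral>a. Y a \<partial>w) \<le> (\<integral>a. g (X a) (Y a) \<partial>w)"
    using l1 l2 iL1 iL2 unfolding g_def eX eY by simp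
  show "(\<integral>a. Y a \<partial>w) = 0 \<longrightarrow> (\<integral>a. X a \<partial>w) = 0" by (rule a1)
  show "(\<integral>a. Y a \<partial>w) = 1 \<longrightarrow> (\<integral>a. X a \<partial>w) = 1" using a2 unfolding eX eY by simp
qed



definition Fm :: "(nat \<Rightarrow> real) \<Rightarrow> policy \<Rightarrow> state pmf \<Rightarrow> state pmf" where
  "Fm \<mu> pol p = bind_pmf p (step \<mu> pol)"

definition runfrom :: "(nat \<Rightarrow> real) \<Rightarrow> policy \<Rightarrow> state \<Rightarrow> nat \<Rightarrow> state pmf" where
  "runfrom \<mu> pol s N = (Fm \<mu> pol ^^ N) (return_pmf s)"

lemma run_runfrom: "run \<mu> pol N = runfrom \<mu> pol ([], None) N"
  unfolding run_def runfrom_def Fm_def[abs_def] by simp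

lemma Fm_pow_bind: "(Fm \<mu> pol ^^ N) (bind_pmf p f) = bind_pmf p (\<lambda>x. (Fm \<mu> pol ^^ N) (f x))"
  by (induction N) (simp_all add: Fm_def bind_assoc_pmf)

lemma runfrom_Suc: "runfrom \<mu> pol s (Suc N) = bind_pmf (step \<mu> pol s) (\<lambda>s'. runfrom \<mu> pol s' N)"
proof -
  have "runfrom \<mu> pol s (Suc N) = (Fm \<mu> pol ^^ N) (Fm \<mu> pol (return_pmf s))"
    unfolding runfrom_def by (simp add: funpow_Suc_right del: funpow.simps)
  also have "Fm \<mu> pol (return_pmf s) = bind_pmf (step \<mu> pol s) return_pmf"
    by (simp add: Fm_def bind_return_pmf bind_return_pmf')
  finally show ?thesis by (simp add: Fm_pow_bind runfrom_def)
qed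

lemma run_Suc: "run \<mu> pol (Suc N) = bind_pmf (run \<mu> pol N) (step \<mu> pol)"
  unfolding run_def by simp

lemma runfrom_0: "runfrom \<mu> pol s 0 = return_pmf s"
  unfolding runfrom_def by simp

lemma step_Some: "step \<mu> pol (h, Some S) = return_pmf (h, Some S)"
  unfolding step_def by simp

definition K :: "(nat \<Rightarrow> real) \<Rightarrow> history \<Rightarrow> action \<Rightarrow> state pmf" where
  "K \<mu> h a = (case a of Stop S \<Rightarrow> return_pmf (h, Some S)
        | Pull i \<Rightarrow> map_pmf (\<lambda>r. (h @ [(i, r)], None)) (bernoulli_pmf (\<mu> i)))"

lemma step_None: "step \<mu> pol (h, None) = bind_pmf (pol h) (K \<mu> h)"
  unfolding step_def K_def by simp

definition Aev :: "nat \<Rightarrow> state set" where "Aev i = {s. \<exists>S. snd s = Some S \<and> i \<notin> S}"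

definition xp :: "(nat \<Rightarrow> real) \<Rightarrow> policy \<Rightarrow> nat \<Rightarrow> nat \<Rightarrow> state \<Rightarrow> real" where
  "xp \<mu> pol i N s = measure_pmf.prob (runfrom \<mu> pol s N) (Aev i)"

definition iota :: "nat \<Rightarrow> state \<Rightarrow> bool" where
  "iota i s = (snd s = None \<and> fst s \<noteq> [] \<and> fst (last (fst s)) = i)"

primrec Cnt :: "(nat \<Rightarrow> real) \<Rightarrow> policy \<Rightarrow> nat \<Rightarrow> nat \<Rightarrow> state \<Rightarrow> real" where
  "Cnt \<mu> pol i 0 s = 0"
| "Cnt \<mu> pol i (Suc N) s = (\<integral>s'. of_bool (iota i s') + Cnt \<mu> pol i N s' \<partial>step \<mu> pol s)"

lemma pmf_int_le:
  assumes "\<And>x. x \<in> set_pmf p \<Longrightarrow> \<bar>f x\<bar> \<le> B" "\<And>x. x \<in> set_pmf p \<Longrightarrow> f x \<le> c"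
  shows "(\<integral>x. f x \<partial>measure_pmf p) \<le> (c::real)"
proof -
  have "(\<integral>x. f x \<partial>measure_pmf p) \<le> (\<integral>x. c \<partial>measure_pmf p)"
    by (rule integral_mono_AE) (use assms pmf_intg[of p f B] in \<open>auto simp: AE_measure_pmf_iff\<close>)
  then show ?thesis by simp
qed

lemma Cnt_bd: "0 \<le> Cnt \<mu> pol i N s \<and> Cnt \<mu> pol i N s \<le> real N"
proof (induction N arbitrary: s)
  case 0 then show ?case by simp
next
  case (Suc N)
  have "0 \<le> Cnt \<mu> pol i (Suc N) s"
    using Suc by (simp add: integral_nonneg)
  moreover have "Cnt \<mu> pol i (Suc N) s \<le> real (Suc N)"
    unfolding Cnt.simps
  proof (rule pmf_int_le[where B="real N + 1"])
    fix s' show "\<bar>of_bool (iota i s') + Cnt \<mu> pol i N s'\<bar> \<le> real N + 1"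
      using Suc.IH[of s'] by (cases "iota i s'") auto
    show "of_bool (iota i s') + Cnt \<mu> pol i N s' \<le> real (Suc N)"
      using Suc.IH[of s'] by (cases "iota i s'") auto
  qed
  ultimately show ?case ..
qed

lemma xp_bd: "0 \<le> xp \<mu> pol i N s \<and> xp \<mu> pol i N s \<le> 1"
  unfolding xp_def by simp

lemma xp_Suc: "xp \<mu> pol i (Suc N) s = (\<integral>s'. xp \<mu> pol i N s' \<partial>step \<mu> pol s)"
  unfolding xp_def runfrom_Suc prob_bind_pmf ..



lemma int_return_pmf: "(\<integral>y. f y \<partial>measure_pmf (return_pmf x)) = (f x :: real)"
  by (simp add: return_pmf.rep_eq integral_return)

lemma g_same: "g p p = 0"
  by (simp add: g_def L_def)

lemma main_ind:
  fixes \<mu> \<nu> :: "nat \<Rightarrow> real" and pol :: policy and i :: nat and D :: real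
  assumes mu: "\<And>j. 0 < \<mu> j \<and> \<mu> j < 1" and nu: "\<And>j. 0 < \<nu> j \<and> \<nu> j < 1"
    and eq: "\<And>j. j \<noteq> i \<Longrightarrow> \<mu> j = \<nu> j" and D: "g (\<mu> i) (\<nu> i) \<le> D"
  shows "(xp \<nu> pol i N s = 0 \<longrightarrow> xp \<mu> pol i N s = 0) \<and> (xp \<nu> pol i N s = 1 \<longrightarrow> xp \<mu> pol i N s = 1)
     \<and> g (xp \<mu> pol i N s) (xp \<nu> pol i N s) \<le> D * Cnt \<mu> pol i N s"
proof (induction N arbitrary: s)
  case 0
  show ?case by (simp add: xp_def runfrom_0 indicator_def g_def L_def)
next
  case (Suc N)
  have "g (\<mu> i) (\<nu> i) \<ge> 0" by (rule g_nonneg) (use mu[of i] nu[of i] in auto)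
  then have D0: "D \<ge> 0" using D by linarith
  obtain h opt where s: "s = (h, opt)" by (cases s)
  show ?case
  proof (cases opt)
    case (Some S)
    have 1: "xp \<mu> pol i (Suc N) s = xp \<mu> pol i N s" "xp \<nu> pol i (Suc N) s = xp \<nu> pol i N s"
      unfolding xp_Suc s Some step_Some int_return_pmf by simp_all
    have 2: "Cnt \<mu> pol i (Suc N) s = Cnt \<mu> pol i N s"
      unfolding Cnt.simps s Some step_Some int_return_pmf by (simp add: iota_def)
    show ?thesis unfolding 1 2 using Suc.IH by blast
  next
    case None
    define X where "X a = (\<integral>s'. xp \<mu> pol i N s' \<partial>K \<mu> h a)" for a
    define Y where "Y a = (\<integral>s'. xp \<nu> pol i N s' \<partial>K \<nu> h a)" for a
    define C where "C a = (\<integral>s'. of_bool (iota i s') + Cnt \<mu> pol i N s' \<partial>K \<mu> h a)" for a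
    have xS: "xp \<mu> pol i (Suc N) s = (\<integral>a. X a \<partial>pol h)"
      unfolding xp_Suc s None step_None X_def
      by (rule integral_bind_pmf_bdd[where B=1]) (use xp_bd in auto)
    have yS: "xp \<nu> pol i (Suc N) s = (\<integral>a. Y a \<partial>pol h)"
      unfolding xp_Suc s None step_None Y_def
      by (rule integral_bind_pmf_bdd[where B=1]) (use xp_bd in auto)
    have cb: "\<bar>of_bool (iota i s') + Cnt \<mu> pol i N s'\<bar> \<le> real N + 1" for s'
      using Cnt_bd[of \<mu> pol i N s'] by (cases "iota i s'") auto
    have cS: "Cnt \<mu> pol i (Suc N) s = (\<integral>a. C a \<partial>pol h)"
      unfolding Cnt.simps s None step_None C_def
      by (rule integral_bind_pmf_bdd[where B="real N + 1"]) (use cb in auto)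
    have act: "0 \<le> X a \<and> X a \<le> 1 \<and> 0 \<le> Y a \<and> Y a \<le> 1 \<and> (Y a = 0 \<longrightarrow> X a = 0) \<and> (Y a = 1 \<longrightarrow> X a = 1)
        \<and> g (X a) (Y a) \<le> D * C a \<and> 0 \<le> C a \<and> C a \<le> real N + 1" for a
    proof (cases a)
      case (Stop S)
      have e: "X a = xp \<mu> pol i N (h, Some S)" "Y a = xp \<nu> pol i N (h, Some S)"
        "C a = Cnt \<mu> pol i N (h, Some S)"
        unfolding X_def Y_def C_def Stop K_def by (simp_all add: int_return_pmf iota_def)
      show ?thesis unfolding e using Suc.IH[of "(h, Some S)"] xp_bd Cnt_bd[of \<mu> pol i N "(h, Some S)"] by auto
    next
      case (Pull j)
      define x1 where "x1 = xp \<mu> pol i N (h @ [(j, True)], None)"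
      define x0 where "x0 = xp \<mu> pol i N (h @ [(j, False)], None)"
      define y1 where "y1 = xp \<nu> pol i N (h @ [(j, True)], None)"
      define y0 where "y0 = xp \<nu> pol i N (h @ [(j, False)], None)"
      define c1 where "c1 = Cnt \<mu> pol i N (h @ [(j, True)], None)"
      define c0 where "c0 = Cnt \<mu> pol i N (h @ [(j, False)], None)"
      have pj: "0 < \<mu> j" "\<mu> j < 1" using mu by auto
      have qj: "0 < \<nu> j" "\<nu> j < 1" using nu by auto
      have eX: "X a = \<mu> j * x1 + (1 - \<mu> j) * x0"
        unfolding X_def Pull K_def x1_def x0_def using pj by (simp add: mult.commute)
      have eY: "Y a = \<nu> j * y1 + (1 - \<nu> j) * y0"
        unfolding Y_def Pull K_def y1_def y0_def using qj by (simp add: mult.commute)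
      have eC: "C a = of_bool (j = i) + \<mu> j * c1 + (1 - \<mu> j) * c0"
        unfolding C_def Pull K_def c1_def c0_def using pj by (simp add: iota_def algebra_simps)
      have I1: "(y1 = 0 \<longrightarrow> x1 = 0) \<and> (y1 = 1 \<longrightarrow> x1 = 1) \<and> g x1 y1 \<le> D * c1"
        unfolding x1_def y1_def c1_def by (rule Suc.IH)
      have I0: "(y0 = 0 \<longrightarrow> x0 = 0) \<and> (y0 = 1 \<longrightarrow> x0 = 1) \<and> g x0 y0 \<le> D * c0"
        unfolding x0_def y0_def c0_def by (rule Suc.IH)
      have bds: "0 \<le> x1" "x1 \<le> 1" "0 \<le> x0" "x0 \<le> 1" "0 \<le> y1" "y1 \<le> 1" "0 \<le> y0" "y0 \<le> 1"
        unfolding x1_def x0_def y1_def y0_def using xp_bd by auto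
      have cbd: "0 \<le> c1" "c1 \<le> real N" "0 \<le> c0" "c0 \<le> real N"
        unfolding c1_def c0_def using Cnt_bd by auto
      note J = J2[OF pj qj bds I1[THEN conjunct1] I1[THEN conjunct2, THEN conjunct1]
                   I0[THEN conjunct1] I0[THEN conjunct2, THEN conjunct1]]
      have gpq: "g (\<mu> j) (\<nu> j) \<le> of_bool (j = i) * D"
        using D eq[of j] g_same by (cases "j = i") auto
      have "g (X a) (Y a) \<le> g (\<mu> j) (\<nu> j) + \<mu> j * g x1 y1 + (1 - \<mu> j) * g x0 y0"
        unfolding eX eY by (rule J(1))
      also have "\<dots> \<le> of_bool (j = i) * D + \<mu> j * (D * c1) + (1 - \<mu> j) * (D * c0)"
      proof -
        have "\<mu> j * g x1 y1 \<le> \<mu> j * (D * c1)" using I1 pj by (intro mult_left_mono) auto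
        moreover have "(1 - \<mu> j) * g x0 y0 \<le> (1 - \<mu> j) * (D * c0)" using I0 pj by (intro mult_left_mono) auto
        ultimately show ?thesis using gpq by linarith
      qed
      also have "\<dots> = D * C a" unfolding eC by (simp add: algebra_simps)
      finally have gg: "g (X a) (Y a) \<le> D * C a" .
      have m1: "0 \<le> \<mu> j * c1" "\<mu> j * c1 \<le> \<mu> j * real N" using cbd pj by (auto intro: mult_left_mono)
      have m0: "0 \<le> (1 - \<mu> j) * c0" "(1 - \<mu> j) * c0 \<le> (1 - \<mu> j) * real N" using cbd pj by (auto intro: mult_left_mono)
      have c01: "0 \<le> C a" "C a \<le> real N + 1" unfolding eC using m1 m0
        by (auto simp: algebra_simps)
      have n1: "0 \<le> \<mu> j * x1" "\<mu> j * x1 \<le> \<mu> j" "0 \<le> (1 - \<mu> j) * x0" "(1 - \<mu> j) * x0 \<le> 1 - \<mu> j"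
        using bds pj by (auto intro: mult_left_le)
      have n2: "0 \<le> \<nu> j * y1" "\<nu> j * y1 \<le> \<nu> j" "0 \<le> (1 - \<nu> j) * y0" "(1 - \<nu> j) * y0 \<le> 1 - \<nu> j"
        using bds qj by (auto intro: mult_left_le)
      have xb: "0 \<le> X a" "X a \<le> 1" "0 \<le> Y a" "Y a \<le> 1" unfolding eX eY using n1 n2 by auto
      show ?thesis using gg c01 xb J(2) J(3) unfolding eX eY by auto
    qed
    have gle: "g (X a) (Y a) \<le> D * (real N + 1)" for a
      using act[of a] D0 by (meson order.trans mult_left_mono)
    have act2: "\<And>a. a \<in> set_pmf (pol h) \<Longrightarrow> 0 \<le> X a \<and> X a \<le> 1 \<and> 0 \<le> Y a \<and> Y a \<le> 1 \<and> (Y a = 0 \<longrightarrow> X a = 0) \<and> (Y a = 1 \<longrightarrow> X a = 1) \<and> g (X a) (Y a) \<le> D * (real N + 1)"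
      using act gle by blast
    note gJr = gJ[of "pol h" X Y "D * (real N + 1)", OF act2]
    have gJa: "g (\<integral>a. X a \<partial>pol h) (\<integral>a. Y a \<partial>pol h) \<le> (\<integral>a. g (X a) (Y a) \<partial>pol h)"
     and gJb: "(\<integral>a. Y a \<partial>pol h) = 0 \<longrightarrow> (\<integral>a. X a \<partial>pol h) = 0"
     and gJc: "(\<integral>a. Y a \<partial>pol h) = 1 \<longrightarrow> (\<integral>a. X a \<partial>pol h) = 1"
      using gJr by blast+
    have "(\<integral>a. g (X a) (Y a) \<partial>pol h) \<le> (\<integral>a. D * C a \<partial>pol h)"
    proof (rule integral_mono_AE)
      have gb: "0 \<le> g (X a) (Y a)" for a by (rule g_nonneg) (use act[of a] in auto)
      show "integrable (measure_pmf (pol h)) (\<lambda>a. g (X a) (Y a))"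
        by (rule pmf_intg[where B="D * (real N + 1)"]) (use gb gle in auto)
      show "integrable (measure_pmf (pol h)) (\<lambda>a. D * C a)"
      proof (rule pmf_intg[where B="D * (real N + 1)"])
        fix a have "0 \<le> C a" "C a \<le> real N + 1" using act[of a] by auto
        then show "\<bar>D * C a\<bar> \<le> D * (real N + 1)" using D0 by (simp add: abs_mult mult_left_mono)
      qed
      show "AE a in measure_pmf (pol h). g (X a) (Y a) \<le> D * C a" using act by auto
    qed
    also have "\<dots> = D * (\<integral>a. C a \<partial>pol h)" by simp
    finally show ?thesis unfolding xS yS cS using gJa gJb gJc by auto
  qed
qed



lemma kt1: fixes q s d :: real assumes "q > 0" "s > 0" "q + s = 1" shows "d^2 / (2 * q) + d^2 / (2 * s) = d^2 / (2 * (q * s))"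
proof -
  have "d^2 / (2 * q) + d^2 / (2 * s) = d^2 * (q + s) / (2 * (q * s))" using assms by (simp add: add_divide_distrib[symmetric] field_simps) (metis distrib_right mult_1)
  then show ?thesis using assms by simp
qed
lemma kt1b: fixes q s d :: real assumes "q * s \<ge> 3/16" shows "d^2 / (2 * (q * s)) \<le> d^2 * (8/3)"
proof -
  have "d^2 / (2 * (q * s)) \<le> d^2 / (2 * (3/16))" using assms by (intro divide_left_mono) auto
  then show ?thesis by simp
qed
lemma kqs: fixes q :: real assumes "1/2 \<le> q" "q \<le> 3/4" shows "q * (1 - q) \<ge> 3/16"
proof -
  have "(q - 1/4) * (3/4 - q) \<ge> 0" using assms by simp
  moreover have "(q - 1/4) * (3/4 - q) = q * (1 - q) - 3/16" by (simp add: field_simps)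
  ultimately show ?thesis by linarith
qed
lemma kt2: fixes q d :: real assumes "1/2 \<le> q" "0 < d" "d \<le> 1/8" shows "d^3 / (2 * q^2) \<le> d^2 / 4"
proof -
  have "(1/2)^2 \<le> q^2" by (rule power_mono) (use assms in auto)
  then have q2: "q^2 \<ge> 1/4" by (simp add: power2_eq_square)
  have "d^3 / (2 * q^2) \<le> d^3 / (2 * (1/4))" using q2 assms by (intro divide_left_mono) auto
  also have "\<dots> = d^2 * (2 * d)" by (simp add: power3_eq_cube power2_eq_square)
  also have "\<dots> \<le> d^2 * (1/4)" using assms by (intro mult_left_mono) auto
  finally show ?thesis by simp
qed
lemma kt3: fixes s d :: real assumes "1/4 \<le> s" "0 < d" "d \<le> 1/8" shows "d^4 / (3 * s^3) \<le> d^2 / 3"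
proof -
  have "(1/4)^3 \<le> s^3" by (rule power_mono) (use assms in auto)
  then have s3: "s^3 \<ge> 1/64" by (simp add: power3_eq_cube)
  have "d^4 / (3 * s^3) \<le> d^4 / (3 * (1/64))" using s3 assms by (intro divide_left_mono) auto
  also have "\<dots> = d^2 * (64 * d^2 / 3)" by (simp add: eval_nat_numeral)
  also have "\<dots> \<le> d^2 * (1/3)"
  proof -
    have "d^2 \<le> (1/8)^2" by (rule power_mono) (use assms in auto)
    then have "d^2 \<le> 1/64" by (simp add: power2_eq_square)
    then have "64 * d^2 / 3 \<le> 1/3" by simp
    then show ?thesis by (intro mult_left_mono) auto
  qed
  finally show ?thesis by simp
qed

lemma ln1p_upper:
  fixes b :: real assumes b: "0 \<le> b"
  shows "ln (1 + b) \<le> b - b^2/2 + b^3/3"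
proof -
  let ?h = "\<lambda>x::real. x - x^2/2 + x^3/3 - ln (1 + x)"
  have "?h 0 \<le> ?h b"
  proof (rule DERIV_nonneg_imp_nondecreasing[OF b])
    fix x :: real assume x: "0 \<le> x" "x \<le> b"
    have "DERIV ?h x :> (1 - x + x^2 - 1 / (1 + x))"
      using x by (auto intro!: derivative_eq_intros simp: power2_eq_square)
    moreover have "1 - x + x^2 - 1 / (1 + x) = x^3 / (1 + x)"
      using x by (simp add: field_simps power2_eq_square power3_eq_cube)
    moreover have "x^3 / (1 + x) \<ge> 0" using x by simp
    ultimately show "\<exists>y. DERIV ?h x :> y \<and> y \<ge> 0" by auto
  qed
  then show ?thesis by simp
qed

lemma ln_upper_le1:
  fixes x :: real assumes x: "0 < x" "x \<le> 1"
  shows "ln x \<le> (x - 1) - (x - 1)^2/2"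
proof -
  let ?h = "\<lambda>t::real. (t - 1) - (t - 1)^2/2 - ln t"
  have "?h 1 \<le> ?h x"
  proof (rule DERIV_nonpos_imp_nonincreasing[OF x(2)])
    fix t :: real assume t: "x \<le> t" "t \<le> 1"
    then have tp: "t > 0" using x by simp
    have "DERIV ?h t :> (1 - (t - 1) - 1 / t)"
      using tp by (auto intro!: derivative_eq_intros simp: power2_eq_square field_simps)
    moreover have "1 - (t - 1) - 1 / t = - ((t - 1)^2 / t)"
      using tp by (simp add: field_simps power2_eq_square)
    moreover have "(t - 1)^2 / t \<ge> 0" using tp by simp
    ultimately show "\<exists>y. DERIV ?h t :> y \<and> y \<le> 0" by auto
  qed
  then show ?thesis by simp
qed

lemma KLb:
  fixes q d :: real
  assumes q: "1/2 \<le> q" "q \<le> 3/4" and d: "0 < d" "d \<le> 1/8"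
  shows "g (q - d) q \<le> 4 * d^2"
proof -
  define s where "s = 1 - q"
  have s: "1/4 \<le> s" "s \<le> 1/2" using q unfolding s_def by auto
  have qp: "q > 0" using q by simp
  have sp: "s > 0" using s by simp
  have p: "q - d > 0" using q d by simp
  have e1: "L (q - d) q = (q - d) * ln ((q - d) / q)" by (simp add: L_def)
  have e2: "L (1 - (q - d)) (1 - q) = (s + d) * ln (1 + d / s)"
    using sp by (simp add: L_def s_def field_simps)
  have l1: "ln ((q - d) / q) \<le> - d / q - d^2 / (2 * q^2)"
  proof -
    have "ln ((q - d) / q) \<le> ((q - d) / q - 1) - ((q - d) / q - 1)^2/2"
      by (rule ln_upper_le1) (use p qp d in auto)
    also have "\<dots> = - d / q - d^2 / (2 * q^2)" using qp by (simp add: field_simps power2_eq_square)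
    finally show ?thesis .
  qed
  have l2: "ln (1 + d / s) \<le> d / s - (d / s)^2/2 + (d / s)^3/3"
    by (rule ln1p_upper) (use d sp in simp)
  have "g (q - d) q \<le> (q - d) * (- d / q - d^2 / (2 * q^2)) + (s + d) * (d / s - (d / s)^2/2 + (d / s)^3/3)"
    unfolding g_def e1 e2 using l1 l2 p sp d by (intro add_mono mult_left_mono) auto
  also have "\<dots> = d^2 / (2 * q) + d^2 / (2 * s) + d^3 / (2 * q^2) - d^3 / (6 * s^2) + d^4 / (3 * s^3)"
    using qp sp by (simp add: field_simps power2_eq_square power3_eq_cube eval_nat_numeral)
  also have "\<dots> \<le> 4 * d^2"
  proof -
    have qs: "q * s \<ge> 3/16" unfolding s_def by (rule kqs) (use q in auto)
    have t1: "d^2 / (2 * q) + d^2 / (2 * s) = d^2 / (2 * (q * s))" by (rule kt1) (use qp sp s_def in auto)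
    have t1b: "d^2 / (2 * (q * s)) \<le> d^2 * (8/3)" by (rule kt1b[OF qs])
    have t2: "d^3 / (2 * q^2) \<le> d^2 / 4" by (rule kt2) (use q d in auto)
    have t3: "d^4 / (3 * s^3) \<le> d^2 / 3" by (rule kt3) (use s d in auto)
    have t5: "d^2 \<ge> 0" by simp
    have t4: "d^3 / (6 * s^2) \<ge> 0" using d sp by simp
    show ?thesis using t1 t1b t2 t3 t4 t5 by linarith
  qed
  finally show ?thesis .
qed



lemma rho_range:
  assumes n: "n \<ge> 3" and e: "0 < \<epsilon>" "\<epsilon> \<le> 1 / (8 * (real n - 1))"
  shows "0 < rho n \<epsilon> i' j \<and> rho n \<epsilon> i' j < 1"
proof -
  have n1: "real n - 1 \<ge> 2" using n by simp
  have a: "(real n - 1) * \<epsilon> \<le> 1/8" using e n1 by (simp add: field_simps)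
  have "2 * \<epsilon> \<le> (real n - 1) * \<epsilon>" using n1 e by (intro mult_right_mono) auto
  then have b: "\<epsilon> \<le> 1/16" using a by linarith
  have c: "(real n + 1) * \<epsilon> \<le> 1/4" using a b by (simp add: algebra_simps)
  have d: "0 \<le> (real n - 1) * \<epsilon>" using n1 e by simp
  have a': "real n * \<epsilon> - \<epsilon> \<le> 1/8" "0 \<le> real n * \<epsilon> - \<epsilon>" using a d by (simp_all add: algebra_simps)
  have c': "real n * \<epsilon> + \<epsilon> \<le> 1/4" using c by (simp add: algebra_simps)
  have v1: "0 < 1/2 + real n * \<epsilon> \<and> 1/2 + real n * \<epsilon> < 1" using a' c' e by linarith
  have w2: "(real n + 1) * \<epsilon> = real n * \<epsilon> + \<epsilon>" "(real n - 1) * \<epsilon> = real n * \<epsilon> - \<epsilon>" by (simp_all add: algebra_simps)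
  have v2: "0 < 1/2 + (real n + 1) * \<epsilon> \<and> 1/2 + (real n + 1) * \<epsilon> < 1" unfolding w2 using a' c' e by linarith
  have v3: "0 < 1/2 + (real n - 1) * \<epsilon> \<and> 1/2 + (real n - 1) * \<epsilon> < 1" unfolding w2 using a' c' e by linarith
  show ?thesis unfolding rho_def using v1 v2 v3 by auto
qed

lemma rho_eq: "i \<noteq> 1 \<Longrightarrow> j \<noteq> i \<Longrightarrow> rho n \<epsilon> 1 j = rho n \<epsilon> i j"
  unfolding rho_def by auto

lemma rho_kl:
  assumes n: "n \<ge> 3" and e: "0 < \<epsilon>" "\<epsilon> \<le> 1 / (8 * (real n - 1))" and i: "i \<noteq> 1"
  shows "g (rho n \<epsilon> 1 i) (rho n \<epsilon> i i) \<le> 16 * \<epsilon>^2"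
proof -
  have n1: "real n - 1 \<ge> 2" using n by simp
  have a: "(real n - 1) * \<epsilon> \<le> 1/8" using e n1 by (simp add: field_simps)
  have "2 * \<epsilon> \<le> (real n - 1) * \<epsilon>" using n1 e by (intro mult_right_mono) auto
  then have b: "\<epsilon> \<le> 1/16" using a by linarith
  have c: "(real n + 1) * \<epsilon> \<le> 1/4" using a b by (simp add: algebra_simps)
  have d: "0 \<le> (real n - 1) * \<epsilon>" using n1 e by simp
  define q where "q = 1/2 + (real n + 1) * \<epsilon>"
  have r1: "rho n \<epsilon> 1 i = q - 2 * \<epsilon>" using i unfolding rho_def q_def by (simp add: algebra_simps)
  have r2: "rho n \<epsilon> i i = q" using i unfolding rho_def q_def by simp
  have "g (q - 2 * \<epsilon>) q \<le> 4 * (2 * \<epsilon>)^2"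
    by (rule KLb) (use c d e b in \<open>auto simp: q_def algebra_simps\<close>)
  then show ?thesis unfolding r1 r2 by (simp add: power2_eq_square)
qed

definition Rev :: "nat \<Rightarrow> state set" where "Rev i = {s. \<exists>S. snd s = Some S \<and> i \<in> S}"
definition Stp :: "state set" where "Stp = {s. snd s \<noteq> None}"

lemma prob_mono_Suc:
  assumes B: "B \<subseteq> Stp"
  shows "measure_pmf.prob (run \<mu> pol N) B \<le> measure_pmf.prob (run \<mu> pol (Suc N)) B"
proof -
  have "measure_pmf.prob (run \<mu> pol N) B = (\<integral>s. indicator B s \<partial>run \<mu> pol N)" by simp
  also have "\<dots> \<le> (\<integral>s. measure_pmf.prob (step \<mu> pol s) B \<partial>run \<mu> pol N)"
  proof (rule integral_mono)
    show "integrable (measure_pmf (run \<mu> pol N)) (indicator B :: _ \<Rightarrow> real)"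
      by (rule pmf_intg[where B=1]) (auto simp: indicator_def)
    show "integrable (measure_pmf (run \<mu> pol N)) (\<lambda>s. measure_pmf.prob (step \<mu> pol s) B)"
      by (rule pmf_intg[where B=1]) auto
    fix s :: state
    show "indicator B s \<le> measure_pmf.prob (step \<mu> pol s) B"
    proof (cases "s \<in> B")
      case True
      then obtain h S where s: "s = (h, Some S)" using B unfolding Stp_def by (cases s) auto
      show ?thesis using True unfolding s step_Some by simp
    qed simp
  qed
  also have "\<dots> = measure_pmf.prob (run \<mu> pol (Suc N)) B"
    unfolding run_Suc prob_bind_pmf ..
  finally show ?thesis .
qed

lemma prob_mono:
  assumes "B \<subseteq> Stp" "N \<le> M"
  shows "measure_pmf.prob (run \<mu> pol N) B \<le> measure_pmf.prob (run \<mu> pol M) B"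
proof -
  have "incseq (\<lambda>N. measure_pmf.prob (run \<mu> pol N) B)"
    by (rule incseq_SucI) (rule prob_mono_Suc[OF assms(1)])
  then show ?thesis using assms(2) by (simp add: incseq_def)
qed

lemma Aev_Stp: "Aev i \<subseteq> Stp" and Rev_Stp: "Rev i \<subseteq> Stp"
  unfolding Aev_def Rev_def Stp_def by auto

lemma Q_side:
  assumes "retain_prob \<nu> pol i \<ge> 1 - \<delta>"
  shows "measure_pmf.prob (run \<nu> pol N) (Aev i) \<le> \<delta>"
proof -
  have key: "measure_pmf.prob (run \<nu> pol M) (Rev i) \<le> 1 - measure_pmf.prob (run \<nu> pol N) (Aev i)" for M
  proof -
    define K where "K = max M N"
    have 1: "measure_pmf.prob (run \<nu> pol M) (Rev i) \<le> measure_pmf.prob (run \<nu> pol K) (Rev i)"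
      by (rule prob_mono[OF Rev_Stp]) (simp add: K_def)
    have 2: "measure_pmf.prob (run \<nu> pol N) (Aev i) \<le> measure_pmf.prob (run \<nu> pol K) (Aev i)"
      by (rule prob_mono[OF Aev_Stp]) (simp add: K_def)
    have disj: "Aev i \<inter> Rev i = {}" unfolding Aev_def Rev_def by auto
    have "measure_pmf.prob (run \<nu> pol K) (Aev i \<union> Rev i) = measure_pmf.prob (run \<nu> pol K) (Aev i) + measure_pmf.prob (run \<nu> pol K) (Rev i)"
      using disj by (simp add: measure_pmf.finite_measure_Union)
    moreover have "measure_pmf.prob (run \<nu> pol K) (Aev i \<union> Rev i) \<le> 1" by simp
    ultimately show ?thesis using 1 2 by linarith
  qed
  have "retain_prob \<nu> pol i \<le> 1 - measure_pmf.prob (run \<nu> pol N) (Aev i)"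
    unfolding retain_prob_def Rev_def[symmetric] by (rule cSUP_least) (use key in auto)
  then show ?thesis using assms by linarith
qed



lemma supp_card:
  assumes v: "valid_policy k m pol"
  shows "s \<in> set_pmf (run \<mu> pol N) \<Longrightarrow> snd s = Some S \<Longrightarrow> card S = m"
proof (induction N arbitrary: s S)
  case 0
  then show ?case unfolding run_def by simp
next
  case (Suc N)
  from Suc.prems(1) obtain s0 where s0: "s0 \<in> set_pmf (run \<mu> pol N)" "s \<in> set_pmf (step \<mu> pol s0)"
    unfolding run_Suc by auto
  obtain h opt where e: "s0 = (h, opt)" by (cases s0)
  show ?case
  proof (cases opt)
    case (Some S0)
    then have "s = s0" using s0(2) e by (simp add: step_Some)
    then show ?thesis using Suc.IH s0(1) Suc.prems(2) by blast
  next
    case None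
    then obtain a where a: "a \<in> set_pmf (pol h)" "s \<in> set_pmf (K \<mu> h a)"
      using s0(2) e by (auto simp: step_None)
    show ?thesis
    proof (cases a)
      case (Stop S')
      then have "s = (h, Some S')" using a(2) by (simp add: K_def)
      then have "S = S'" using Suc.prems(2) by simp
      then show ?thesis using v a(1) Stop unfolding valid_policy_def by fastforce
    next
      case (Pull j)
      then have "snd s = None" using a(2) by (auto simp: K_def)
      then show ?thesis using Suc.prems(2) by simp
    qed
  qed
qed

lemma card_comb:
  assumes "finite S" "card S = m" "2 \<le> k"
  shows "real (card ({2..k} \<inter> {i. i \<notin> S})) \<ge> real k - 1 - real m + of_bool (1 \<in> S)"
proof -
  have e1: "{2..k} \<inter> {i. i \<notin> S} = {2..k} - S" by auto
  have c1: "card ({2..k} - S) = card {2..k} - card ({2..k} \<inter> S)"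
    by (rule card_Diff_subset_Int) simp
  have ck: "card {2..k} = k - 1" by simp
  have "card (({2..k} \<inter> S) \<union> ({1} \<inter> S)) = card ({2..k} \<inter> S) + card ({1} \<inter> S)"
    by (rule card_Un_disjoint) auto
  moreover have "card (({2..k} \<inter> S) \<union> ({1} \<inter> S)) \<le> card S"
    by (rule card_mono) (use assms in auto)
  moreover have "card ({1} \<inter> S) = of_bool (1 \<in> S)" by auto
  ultimately have c2: "card ({2..k} \<inter> S) + of_bool (1 \<in> S) \<le> m" using assms by simp
  have c3: "card ({2..k} \<inter> S) \<le> k - 1" using card_mono[of "{2..k}" "{2..k} \<inter> S"] ck by auto
  have "real (card ({2..k} - S)) = real (k - 1) - real (card ({2..k} \<inter> S))"
    unfolding c1 ck using c3 by (simp add: of_nat_diff)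
  also have "\<dots> \<ge> real k - 1 - real m + of_bool (1 \<in> S)"
    using c2 assms(3) by (cases "1 \<in> S") (auto simp: of_nat_diff)
  finally show ?thesis unfolding e1 .
qed

lemma P_side:
  assumes v: "valid_policy k m pol" and m: "1 \<le> m" and k: "2 \<le> k"
  shows "(\<Sum>i\<in>{2..k}. measure_pmf.prob (run \<mu> pol N) (Aev i))
     \<ge> (real k - 1 - real m) * measure_pmf.prob (run \<mu> pol N) Stp + measure_pmf.prob (run \<mu> pol N) (Rev 1)"
proof -
  let ?M = "run \<mu> pol N"
  have l: "(\<Sum>i\<in>{2..k}. measure_pmf.prob ?M (Aev i)) = (\<integral>s. (\<Sum>i\<in>{2..k}. indicator (Aev i) s :: real) \<partial>?M)"
  proof -
    have "(\<integral>s. (\<Sum>i\<in>{2..k}. indicator (Aev i) s :: real) \<partial>?M) = (\<Sum>i\<in>{2..k}. (\<integral>s. indicator (Aev i) s \<partial>?M))"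
      by (rule Bochner_Integration.integral_sum[where f="\<lambda>i s. indicator (Aev i) s"]) (auto intro!: pmf_intg[where B=1] simp: indicator_def)
    then show ?thesis by simp
  qed
  have r: "(real k - 1 - real m) * measure_pmf.prob ?M Stp + measure_pmf.prob ?M (Rev 1)
      = (\<integral>s. (real k - 1 - real m) * indicator Stp s + indicator (Rev 1) s \<partial>?M)"
  proof -
    have "(\<integral>s. (real k - 1 - real m) * indicator Stp s + indicator (Rev 1) s \<partial>?M)
        = (\<integral>s. (real k - 1 - real m) * indicator Stp s \<partial>?M) + (\<integral>s. indicator (Rev 1) s \<partial>?M)"
      by (rule Bochner_Integration.integral_add) (auto intro!: pmf_intg[where B=1] simp: indicator_def)
    then show ?thesis by simp
  qed
  have pt: "(real k - 1 - real m) * indicator Stp s + indicator (Rev 1) s \<le> (\<Sum>i\<in>{2..k}. indicator (Aev i) s)"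
    if s: "s \<in> set_pmf ?M" for s
  proof (cases "snd s")
    case None
    then show ?thesis by (simp add: indicator_def Stp_def Rev_def Aev_def)
  next
    case (Some S)
    have cS: "card S = m" using supp_card[OF v s Some] .
    then have fS: "finite S" using m by (metis card.infinite not_one_le_zero)
    have "(\<Sum>i\<in>{2..k}. indicator (Aev i) s :: real) = (\<Sum>i\<in>{2..k}. of_bool (i \<notin> S))"
      by (rule sum.cong) (auto simp: indicator_def Aev_def Some)
    also have "\<dots> = real (card ({2..k} \<inter> {i. i \<notin> S}))" by simp
    finally have e: "(\<Sum>i\<in>{2..k}. indicator (Aev i) s :: real) = real (card ({2..k} \<inter> {i. i \<notin> S}))" .
    have "(real k - 1 - real m) * indicator Stp s + indicator (Rev 1) s = real k - 1 - real m + of_bool (1 \<in> S)"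
      by (simp add: indicator_def Stp_def Rev_def Some)
    then show ?thesis unfolding e using card_comb[OF fS cS k] by simp
  qed
  have i1: "integrable (measure_pmf ?M) (\<lambda>s. (\<Sum>i\<in>{2..k}. indicator (Aev i) s :: real))"
  proof (rule pmf_intg[where B="real k"])
    fix s
    have "(\<Sum>i\<in>{2..k}. indicator (Aev i) s :: real) \<le> (\<Sum>i\<in>{2..k}. 1)"
      by (rule sum_mono) (simp add: indicator_def)
    moreover have "(\<Sum>i\<in>{2..k}. indicator (Aev i) s :: real) \<ge> 0" by (rule sum_nonneg) simp
    ultimately show "\<bar>\<Sum>i\<in>{2..k}. indicator (Aev i) s :: real\<bar> \<le> real k" by simp
  qed
  have i2: "integrable (measure_pmf ?M) (\<lambda>s. (real k - 1 - real m) * indicator Stp s + indicator (Rev 1) s)"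
    by (rule pmf_intg[where B="\<bar>real k - 1 - real m\<bar> + 1"]) (auto simp: indicator_def)
  show ?thesis unfolding l r
    by (rule integral_mono_AE[OF i2 i1]) (use pt in \<open>auto simp: AE_measure_pmf_iff\<close>)
qed



lemma iota_sum:
  assumes "finite I"
  shows "(\<Sum>i\<in>I. of_bool (iota i s) :: real) \<le> of_bool (snd s = None)"
proof -
  have "(\<Sum>i\<in>I. of_bool (iota i s) :: real)
      = (\<Sum>i\<in>I. if fst (last (fst s)) = i then of_bool (snd s = None \<and> fst s \<noteq> []) else 0)"
    by (rule sum.cong) (auto simp: iota_def)
  also have "\<dots> = (if fst (last (fst s)) \<in> I then of_bool (snd s = None \<and> fst s \<noteq> []) else 0)"
    using assms by (simp add: sum.delta)
  also have "\<dots> \<le> of_bool (snd s = None)" by auto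
  finally show ?thesis .
qed

lemma runfrom_1: "runfrom \<mu> pol s (Suc 0) = step \<mu> pol s"
  unfolding runfrom_Suc runfrom_0 by (simp add: bind_return_pmf')

definition NoneS :: "state set" where "NoneS = {s. snd s = None}"

lemma Cnt_total:
  assumes I: "finite I"
  shows "(\<Sum>i\<in>I. Cnt \<mu> pol i N s) \<le> (\<Sum>t<N. measure_pmf.prob (runfrom \<mu> pol s (Suc t)) NoneS)"
proof (induction N arbitrary: s)
  case 0 then show ?case by simp
next
  case (Suc N)
  let ?T = "\<lambda>s'. (\<Sum>t<N. measure_pmf.prob (runfrom \<mu> pol s' (Suc t)) NoneS)"
  have cb: "\<bar>of_bool (iota i s') + Cnt \<mu> pol i N s'\<bar> \<le> real N + 1" for i s'
    using Cnt_bd[of \<mu> pol i N s'] by (cases "iota i s'") auto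
  have "(\<Sum>i\<in>I. Cnt \<mu> pol i (Suc N) s)
      = (\<integral>s'. (\<Sum>i\<in>I. of_bool (iota i s') + Cnt \<mu> pol i N s') \<partial>step \<mu> pol s)"
    unfolding Cnt.simps
    by (rule Bochner_Integration.integral_sum[where f="\<lambda>i s'. of_bool (iota i s') + Cnt \<mu> pol i N s'", symmetric])
      (rule pmf_intg[where B="real N + 1"], rule cb)
  also have "\<dots> \<le> (\<integral>s'. indicator NoneS s' + ?T s' \<partial>step \<mu> pol s)"
  proof (rule integral_mono)
    show "integrable (measure_pmf (step \<mu> pol s)) (\<lambda>s'. \<Sum>i\<in>I. of_bool (iota i s') + Cnt \<mu> pol i N s')"
      by (rule Bochner_Integration.integrable_sum) (rule pmf_intg[where B="real N + 1"], rule cb)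
    show "integrable (measure_pmf (step \<mu> pol s)) (\<lambda>s'. indicator NoneS s' + ?T s')"
    proof (rule pmf_intg[where B="1 + real N"])
      fix s'
      have "?T s' \<le> (\<Sum>t<N. 1)" by (rule sum_mono) simp
      moreover have "?T s' \<ge> 0" by (rule sum_nonneg) simp
      ultimately show "\<bar>indicator NoneS s' + ?T s'\<bar> \<le> 1 + real N" by (auto simp: indicator_def)
    qed
    fix s'
    have "(\<Sum>i\<in>I. of_bool (iota i s') + Cnt \<mu> pol i N s') = (\<Sum>i\<in>I. of_bool (iota i s')) + (\<Sum>i\<in>I. Cnt \<mu> pol i N s')"
      by (simp add: sum.distrib)
    also have "\<dots> \<le> indicator NoneS s' + ?T s'"
      using iota_sum[OF I, of s'] Suc.IH[of s'] by (auto simp: indicator_def NoneS_def)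
    finally show "(\<Sum>i\<in>I. of_bool (iota i s') + Cnt \<mu> pol i N s') \<le> indicator NoneS s' + ?T s'" .
  qed
  also have "\<dots> = (\<integral>s'. indicator NoneS s' \<partial>step \<mu> pol s) + (\<integral>s'. ?T s' \<partial>step \<mu> pol s)"
    by (rule Bochner_Integration.integral_add) (auto intro!: pmf_intg[where B=1] Bochner_Integration.integrable_sum simp: indicator_def)
  also have "(\<integral>s'. ?T s' \<partial>step \<mu> pol s) = (\<Sum>t<N. (\<integral>s'. measure_pmf.prob (runfrom \<mu> pol s' (Suc t)) NoneS \<partial>step \<mu> pol s))"
    by (rule Bochner_Integration.integral_sum) (auto intro!: pmf_intg[where B=1])
  also have "\<dots> = (\<Sum>t<N. measure_pmf.prob (runfrom \<mu> pol s (Suc (Suc t))) NoneS)"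
    by (simp add: runfrom_Suc[of \<mu> pol s "Suc _"] prob_bind_pmf)
  also have "(\<integral>s'. indicator NoneS s' \<partial>step \<mu> pol s) = measure_pmf.prob (runfrom \<mu> pol s (Suc 0)) NoneS"
    by (simp add: runfrom_1)
  finally show ?case by (simp only: sum.lessThan_Suc_shift)
qed



lemma tang:
  fixes x y \<alpha> \<delta> :: real
  assumes x: "0 \<le> x" "x \<le> 1" and y: "0 \<le> y" "y \<le> \<delta>" and d: "0 < \<delta>" "\<delta> < 1" "\<delta> < \<alpha>"
    and ac: "y = 0 \<longrightarrow> x = 0" "y = 1 \<longrightarrow> x = 1"
  shows "g x y \<ge> \<delta> - \<alpha> + ln (\<alpha> / \<delta>) * x"
proof (cases "x \<le> \<delta>")
  case True
  have "g x y \<ge> 0" by (rule g_nonneg) (use x y d ac in auto)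
  have La: "ln (\<alpha> / \<delta>) \<ge> 0" using d by simp
  have "ln (\<alpha> / \<delta>) * x \<le> ln (\<alpha> / \<delta>) * \<delta>" by (intro mult_left_mono) (use La True in auto)
  also have "\<dots> \<le> (\<alpha> / \<delta> - 1) * \<delta>" using d by (intro mult_right_mono ln_le_minus_one) auto
  also have "\<dots> = \<alpha> - \<delta>" using d by (simp add: field_simps)
  finally show ?thesis using \<open>g x y \<ge> 0\<close> by linarith
next
  case False
  then have xd: "x > \<delta>" by simp
  then have xp: "x > 0" using d by simp
  have "y \<noteq> 0" using ac(1) xp by auto
  then have yp: "y > 0" using y(1) by simp
  have 1: "L x y \<ge> x * ln (x / \<delta>) + x - y * x / \<delta>" by (rule LS) (use x y d xp ac in auto)
  have 2: "L (1 - x) (1 - y) \<ge> (1 - x) - (1 - y)" by (rule gibbs) (use x y d ac in auto)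
  have 3: "y * (1 - x / \<delta>) \<ge> \<delta> * (1 - x / \<delta>)"
  proof (rule mult_right_mono_neg)
    show "y \<le> \<delta>" by (rule y(2))
    show "1 - x / \<delta> \<le> 0" using xd d by (simp add: field_simps)
  qed
  have 4: "\<delta> * (1 - x / \<delta>) = \<delta> - x" using d by (simp add: field_simps)
  have 5: "x * ln (x / \<delta>) = x * ln (x / \<alpha>) + x * ln (\<alpha> / \<delta>)"
    using xp d by (simp add: ln_div algebra_simps)
  have 6: "x * ln (x / \<alpha>) \<ge> x - \<alpha>" using gibbs[of x \<alpha>] xp d by (simp add: L_def)
  have "g x y \<ge> x * ln (x / \<delta>) + y * (1 - x / \<delta>)"
    using 1 2 unfolding g_def by (simp add: algebra_simps)
  then show ?thesis using 3 4 5 6 by (simp add: algebra_simps)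
qed

lemma ln_lower2:
  fixes y :: real assumes y: "1 \<le> y"
  shows "ln y \<ge> 2 * (y - 1) / (y + 1)"
proof -
  let ?h = "\<lambda>t::real. ln t + 4 / (t + 1)"
  have "?h 1 \<le> ?h y"
  proof (rule DERIV_nonneg_imp_nondecreasing[OF y])
    fix t :: real assume t: "1 \<le> t" "t \<le> y"
    have tp: "t > 0" using t by simp
    have "DERIV ?h t :> (1 / t - 4 / (t + 1)^2)"
      using tp
      apply -
      apply (rule derivative_eq_intros refl | force)+
      apply (simp add: power2_eq_square field_simps)
      done
    moreover have "1 / t - 4 / (t + 1)^2 = (t - 1)^2 / (t * (t + 1)^2)"
    proof -
      have a: "t \<noteq> 0" "(t + 1)^2 \<noteq> 0" using t by auto
      have "1 / t - 4 / (t + 1)^2 = ((t + 1)^2 - 4 * t) / (t * (t + 1)^2)"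
        using a by (simp add: diff_frac_eq)
      also have "(t + 1)^2 - 4 * t = (t - 1)^2" by (simp add: power2_eq_square algebra_simps)
      finally show ?thesis .
    qed
    moreover have "(t - 1)^2 / (t * (t + 1)^2) \<ge> 0" using t by simp
    ultimately show "\<exists>z. DERIV ?h t :> z \<and> z \<ge> 0" by auto
  qed
  then have "ln y + 4 / (y + 1) \<ge> 2" by simp
  moreover have "2 * (y - 1) / (y + 1) = 2 - 4 / (y + 1)" using y by (simp add: field_simps)
  ultimately show ?thesis by linarith
qed

lemma key_ineq:
  fixes \<alpha> \<beta> \<delta> :: real
  assumes b: "0 < \<beta>" "\<beta> < 1" and a: "0 < \<alpha>" and d: "0 < \<delta>" and r: "\<alpha> / \<delta> \<ge> 1 / (1 - \<beta>)"
  shows "\<alpha> * ln (\<alpha> / \<delta>) - \<alpha> + \<delta> \<ge> \<beta> / 2 * (\<alpha> * ln (\<alpha> / \<delta>))"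
proof -
  define y where "y = \<alpha> / \<delta>"
  have r': "1 / (1 - \<beta>) \<le> y" using r unfolding y_def .
  have "1 \<le> y * (1 - \<beta>)" using r' b by (simp add: divide_le_eq)
  then have yb: "(1 - \<beta>) * y \<ge> 1" by (simp add: mult.commute)
  have y1: "y > 1"
  proof (rule ccontr)
    assume "\<not> y > 1"
    then have "y \<le> 1" by simp
    then have "(1 - \<beta>) * y \<le> (1 - \<beta>) * 1" using b by (intro mult_left_mono) auto
    then show False using yb b by (smt (verit))
  qed
  have l: "ln y \<ge> 2 * (y - 1) / (y + 1)" using ln_lower2 y1 by simp
  have "(1 - \<beta>/2) * ln y \<ge> (1 - \<beta>/2) * (2 * (y - 1) / (y + 1))"
    using l b by (intro mult_left_mono) auto
  also have "(1 - \<beta>/2) * (2 * (y - 1) / (y + 1)) = (2 - \<beta>) * (y - 1) / (y + 1)"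
    using y1 by (simp add: field_simps)
  also have "\<dots> \<ge> (y - 1) / y"
  proof -
    have "(2 - \<beta>) * y \<ge> y + 1" using yb by (simp add: algebra_simps)
    then have "(2 - \<beta>) * (y - 1) * y \<ge> (y - 1) * (y + 1)" using y1
      by (smt (verit) mult_left_mono mult.commute mult.assoc)
    then show ?thesis using y1 by (simp add: field_simps)
  qed
  finally have m: "(1 - \<beta>/2) * ln y \<ge> (y - 1) / y" .
  have "\<alpha> * ((1 - \<beta>/2) * ln y) \<ge> \<alpha> * ((y - 1) / y)" by (rule mult_left_mono) (use m a in auto)
  moreover have "\<alpha> * ((y - 1) / y) = \<alpha> - \<delta>" using a d unfolding y_def by (simp add: field_simps)
  ultimately show ?thesis unfolding y_def by (simp add: algebra_simps)
qed



theorem lemma4p3: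
  fixes n k m :: nat and \<epsilon> \<beta> \<delta> :: real and pol :: policy
  assumes "n \<ge> 3" and "2 \<le> k" and "1 \<le> m" and "m < k"
    and "0 < \<epsilon>" and "\<epsilon> \<le> 1 / (8 * (real n - 1))"
    and "0 < \<beta>" and "\<beta> < 1"
    and "0 < \<delta>" and "\<delta> \<le> (real k - real m) / real k * (1 - \<beta>)"
    and "valid_policy k m pol"
    and "\<forall>i \<in> {1..k}. stops_as (rho n \<epsilon> i) pol"
    and "PAC_I0 k n \<epsilon> \<delta> pol"
  shows "expected_T (rho n \<epsilon> 1) pol \<ge>
    ennreal (\<beta> / 32 * (real k - real m - \<delta>) / \<epsilon>^2
             * ln ((real k - real m - \<delta>) / ((real k - 1) * \<delta>)))"
proof -
  note n = assms(1) and k = assms(2) and m = assms(3) and mk = assms(4) and e = assms(5) assms(6)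
    and b = assms(7) assms(8) and d = assms(9) assms(10) and v = assms(11) and st = assms(12) and pac = assms(13)
  define \<mu> where "\<mu> = rho n \<epsilon> 1"
  define D where "D = 16 * \<epsilon>^2"
  define \<alpha> where "\<alpha> = (real k - real m - \<delta>) / (real k - 1)"
  define La where "La = ln (\<alpha> / \<delta>)"
  define T where "T N = (\<Sum>t<N. measure_pmf.prob (run \<mu> pol (Suc t)) NoneS)" for N
  have Dp: "D > 0" unfolding D_def using e by simp
  have k1: "real k - 1 > 0" using k by simp
  have km: "real k - real m > 0" using mk by simp
  have kp: "real k > 0" using k by simp
  have dk: "\<delta> * real k \<le> (real k - real m) * (1 - \<beta>)"
    using d(2) kp by (simp add: field_simps)
  have dk2: "(real k - real m) * (1 - \<beta>) < real k - real m" using km b by simp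
  have d1: "\<delta> < 1"
  proof -
    have "\<delta> * real k < real k" using dk dk2 assms(3) by simp
    then show ?thesis using kp by simp
  qed
  have ad: "\<delta> < \<alpha>"
  proof -
    have "\<delta> * (real k - 1) < real k - real m - \<delta>" using dk dk2 by (simp add: algebra_simps)
    then show ?thesis unfolding \<alpha>_def using k1 by (simp add: field_simps)
  qed
  have ap: "\<alpha> > 0" using ad d by simp
  have ratio: "\<alpha> / \<delta> \<ge> 1 / (1 - \<beta>)"
  proof -
    have "(1 - \<beta>) * \<delta> \<le> \<delta>" using b d by (simp add: algebra_simps)
    then have "(real k - 1) * \<delta> \<le> (1 - \<beta>) * (real k - real m - \<delta>)" using dk by (simp add: algebra_simps)
    then have "\<delta> \<le> (1 - \<beta>) * \<alpha>" unfolding \<alpha>_def using k1 by (simp add: field_simps)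
    then show ?thesis using b d by (simp add: field_simps)
  qed
  have Lap: "La \<ge> 0" unfolding La_def using ad d by simp
  have mu_r: "\<And>j. 0 < \<mu> j \<and> \<mu> j < 1" unfolding \<mu>_def by (rule rho_range[OF n e])
  have bnd: "(real k - 1) * (\<delta> - \<alpha>) + La * ((real k - 1 - real m) * measure_pmf.prob (run \<mu> pol N) Stp
        + measure_pmf.prob (run \<mu> pol N) (Rev 1)) \<le> D * T N" for N
  proof -
    let ?x = "\<lambda>i. measure_pmf.prob (run \<mu> pol N) (Aev i)"
    have per: "\<delta> - \<alpha> + La * ?x i \<le> D * Cnt \<mu> pol i N ([], None)" if i: "i \<in> {2..k}" for i
    proof -
      define \<nu> where "\<nu> = rho n \<epsilon> i"
      have i1: "i \<noteq> 1" using i by auto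
      have nu_r: "\<And>j. 0 < \<nu> j \<and> \<nu> j < 1" unfolding \<nu>_def by (rule rho_range[OF n e])
      have eq: "\<And>j. j \<noteq> i \<Longrightarrow> \<mu> j = \<nu> j" unfolding \<mu>_def \<nu>_def using i1 by (rule rho_eq)
      have kl: "g (\<mu> i) (\<nu> i) \<le> D" unfolding \<mu>_def \<nu>_def D_def by (rule rho_kl[OF n e i1])
      note MI = main_ind[of \<mu> \<nu> i D pol N "([], None)", OF mu_r nu_r eq kl]
      have xe: "xp \<mu> pol i N ([], None) = ?x i" unfolding xp_def run_runfrom ..
      have ye: "xp \<nu> pol i N ([], None) = measure_pmf.prob (run \<nu> pol N) (Aev i)" unfolding xp_def run_runfrom ..
      have ret: "retain_prob \<nu> pol i \<ge> 1 - \<delta>" using pac i unfolding PAC_I0_def \<nu>_def by auto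
      have yd: "measure_pmf.prob (run \<nu> pol N) (Aev i) \<le> \<delta>" by (rule Q_side[OF ret])
      have "\<delta> - \<alpha> + ln (\<alpha> / \<delta>) * ?x i \<le> g (?x i) (measure_pmf.prob (run \<nu> pol N) (Aev i))"
        by (rule tang) (use yd d d1 ad MI xe ye in auto)
      also have "\<dots> \<le> D * Cnt \<mu> pol i N ([], None)" using MI xe ye by simp
      finally show ?thesis unfolding La_def .
    qed
    have "(\<Sum>i\<in>{2..k}. \<delta> - \<alpha> + La * ?x i) \<le> (\<Sum>i\<in>{2..k}. D * Cnt \<mu> pol i N ([], None))"
      by (rule sum_mono) (rule per)
    also have "\<dots> = D * (\<Sum>i\<in>{2..k}. Cnt \<mu> pol i N ([], None))" by (simp add: sum_distrib_left)
    also have "\<dots> \<le> D * T N"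
    proof -
      have "(\<Sum>i\<in>{2..k}. Cnt \<mu> pol i N ([], None)) \<le> T N"
        using Cnt_total[of "{2..k}" \<mu> pol N "([], None)"] unfolding T_def run_runfrom by simp
      then show ?thesis using Dp by simp
    qed
    finally have s1: "(\<Sum>i\<in>{2..k}. \<delta> - \<alpha> + La * ?x i) \<le> D * T N" .
    have s2: "(\<Sum>i\<in>{2..k}. \<delta> - \<alpha> + La * ?x i) = (real k - 1) * (\<delta> - \<alpha>) + La * (\<Sum>i\<in>{2..k}. ?x i)"
      using k by (simp add: sum.distrib sum_distrib_left of_nat_diff)
    have s3: "La * ((real k - 1 - real m) * measure_pmf.prob (run \<mu> pol N) Stp + measure_pmf.prob (run \<mu> pol N) (Rev 1))
        \<le> La * (\<Sum>i\<in>{2..k}. ?x i)"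
      using P_side[OF v m k, of \<mu> N] Lap by (intro mult_left_mono) auto
    show ?thesis using s1 s2 s3 by linarith
  qed
  have ET: "ennreal (T N) \<le> expected_T \<mu> pol" for N
  proof -
    have "ennreal (T N) = (\<Sum>t<N. ennreal (measure_pmf.prob (run \<mu> pol (Suc t)) {s. snd s = None}))"
      unfolding T_def NoneS_def by (simp add: sum_ennreal)
    also have "\<dots> \<le> expected_T \<mu> pol" unfolding expected_T_def
      by (rule sum_le_suminf) (auto intro: summableI)
    finally show ?thesis .
  qed
  define c where "c = (real k - 1) * (\<delta> - \<alpha>) + La * (real k - real m - \<delta>)"
  have lim: "ennreal (c / D) \<le> expected_T \<mu> pol"
  proof (rule ennreal_le_epsilon)
    fix ee :: real assume ee: "0 < ee"
    define \<eta> where "\<eta> = ee * D / (La * (real k - real m) + 1)"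
    have "La * (real k - real m) \<ge> 0" using Lap km by simp
    then have den: "La * (real k - real m) + 1 > 0" by linarith
    have etap: "\<eta> > 0" unfolding \<eta>_def using ee Dp den by simp
    have etab: "La * \<eta> * (real k - real m) \<le> ee * D"
    proof -
      have "La * \<eta> * (real k - real m) = ee * D * (La * (real k - real m)) / (La * (real k - real m) + 1)"
        unfolding \<eta>_def by (simp add: field_simps)
      also have "\<dots> \<le> ee * D"
        using den ee Dp Lap km by (simp add: field_simps)
      finally show ?thesis .
    qed
    have stops: "stops_as \<mu> pol" using st k unfolding \<mu>_def by auto
    then have "eventually (\<lambda>N. 1 - \<eta> < measure_pmf.prob (run \<mu> pol N) Stp) sequentially"
      unfolding stops_as_def Stp_def using etap by (intro order_tendstoD(1)) auto
    then obtain N0 where N0: "\<And>N. N \<ge> N0 \<Longrightarrow> 1 - \<eta> < measure_pmf.prob (run \<mu> pol N) Stp"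
      unfolding eventually_sequentially by auto
    have ret1: "retain_prob \<mu> pol 1 \<ge> 1 - \<delta>" using pac k unfolding PAC_I0_def \<mu>_def by auto
    have "1 - \<delta> - \<eta> < (SUP N. measure_pmf.prob (run \<mu> pol N) (Rev 1))"
      using ret1 etap unfolding retain_prob_def Rev_def by simp
    then obtain N1 where N1: "1 - \<delta> - \<eta> < measure_pmf.prob (run \<mu> pol N1) (Rev 1)"
      by (subst (asm) less_cSUP_iff) (auto intro!: bdd_aboveI[where M=1])
    define N where "N = max N0 N1"
    have pS: "measure_pmf.prob (run \<mu> pol N) Stp > 1 - \<eta>" using N0 unfolding N_def by simp
    have pR: "measure_pmf.prob (run \<mu> pol N) (Rev 1) > 1 - \<delta> - \<eta>"
    proof -
      have "measure_pmf.prob (run \<mu> pol N1) (Rev 1) \<le> measure_pmf.prob (run \<mu> pol N) (Rev 1)"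
        by (rule prob_mono[OF Rev_Stp]) (simp add: N_def)
      then show ?thesis using N1 by linarith
    qed
    have kmm: "real k - 1 - real m \<ge> 0" using mk by simp
    have "(real k - 1 - real m) * (1 - \<eta>) + (1 - \<delta> - \<eta>)
        \<le> (real k - 1 - real m) * measure_pmf.prob (run \<mu> pol N) Stp + measure_pmf.prob (run \<mu> pol N) (Rev 1)"
      using pS pR kmm by (intro add_mono mult_left_mono) auto
    then have "La * ((real k - 1 - real m) * (1 - \<eta>) + (1 - \<delta> - \<eta>))
        \<le> La * ((real k - 1 - real m) * measure_pmf.prob (run \<mu> pol N) Stp + measure_pmf.prob (run \<mu> pol N) (Rev 1))"
      using Lap by (rule mult_left_mono)
    moreover have "La * ((real k - 1 - real m) * (1 - \<eta>) + (1 - \<delta> - \<eta>)) = La * (real k - real m - \<delta>) - La * \<eta> * (real k - real m)"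
      by (simp add: algebra_simps)
    ultimately have "c - ee * D \<le> D * T N" using bnd[of N] etab unfolding c_def by linarith
    then have "c / D - ee \<le> T N" using Dp by (simp add: field_simps)
    then have "c / D \<le> T N + ee" by simp
    then have "ennreal (c / D) \<le> ennreal (T N + ee)" by (rule ennreal_leI)
    also have "\<dots> = ennreal (T N) + ennreal ee"
      using ee by (intro ennreal_plus) (auto simp: T_def intro: sum_nonneg)
    also have "\<dots> \<le> expected_T \<mu> pol + ennreal ee" using ET[of N] by (rule add_right_mono)
    finally show "ennreal (c / D) \<le> expected_T \<mu> pol + ennreal ee" .
  qed
  have cval: "c = (real k - 1) * (\<alpha> * La - \<alpha> + \<delta>)"
  proof -
    have h: "real k - real m - \<delta> = (real k - 1) * \<alpha>" unfolding \<alpha>_def using k1 by simp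
    show ?thesis unfolding c_def h by (simp add: algebra_simps)
  qed
  have key: "\<alpha> * La - \<alpha> + \<delta> \<ge> \<beta> / 2 * (\<alpha> * La)"
    unfolding La_def by (rule key_ineq[OF b ap d(1) ratio])
  have arg: "(real k - real m - \<delta>) / ((real k - 1) * \<delta>) = \<alpha> / \<delta>"
    unfolding \<alpha>_def using k1 d by (simp add: field_simps)
  have "\<beta> / 32 * (real k - real m - \<delta>) / \<epsilon>^2 * ln ((real k - real m - \<delta>) / ((real k - 1) * \<delta>))
      = (real k - 1) * (\<beta> / 2 * (\<alpha> * La)) / D"
    unfolding arg La_def[symmetric] unfolding D_def \<alpha>_def using k1 e by (simp add: field_simps)
  also have "\<dots> \<le> c / D"
    unfolding cval using key k1 Dp by (intro divide_right_mono mult_left_mono) auto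
  finally have fin: "\<beta> / 32 * (real k - real m - \<delta>) / \<epsilon>^2 * ln ((real k - real m - \<delta>) / ((real k - 1) * \<delta>)) \<le> c / D" .
  show ?thesis
    using order.trans[OF ennreal_leI[OF fin] lim] unfolding \<mu>_def .
qed

end
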